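(* For every integer $m \ge 3$ and every $\alpha \in [0,1]$, the rule \textsc{PluralityMatching} has distortion exactly $2+\alpha$ on $\alpha$-decisive metric spaces. More precisely: (i) for every election $(V,C,\sigma)$ with $|C|=m$, every $\alpha$-decisive distance function $d$ consistent with $\sigma$, every candidate $a$ whose integral domination graph $G(a)$ admits a perfect matching, and every candidate $b \in C$, we have $\mathrm{SC}(a) \le (2+\alpha)\,\mathrm{SC}(b)$; and (ii) this bound is tight: the supremum, over all elections with $m$ candidates, all $\alpha$-decisive distance functions $d$ consistent with the profile, and all candidates $a$ that \textsc{PluralityMatching} may return (i.e.\ whose $G(a)$ admits a perfect matching), of $\mathrm{SC}(a)/\min_{c\in C}\mathrm{SC}(c)$ equals $2+\alpha$.
   Context: An election consists of a set of voters $V=\{1,\dots,n\}$ ($n\ge 1$), a finite set $C$ of $m$ candidates, and a preference profile $\sigma=(\sigma_i)_{i\in V}$, where each $\sigma_i$ is a linear order over $C$; write $c \succ_i c'$ if $i$ ranks $c$ above $c'$, and $c \succeq_i c'$ if $c=c'$ or $c\succ_i c'$. Voters and candidates are located at points of a metric space; equivalently, we have a distance function $d$ on $V\cup C$ that is nonnegative, symmetric and satisfies the triangle inequality (distinct voters/candidates may be co-located, i.e.\ at distance $0$). $d$ is consistent with $\sigma$ if $d(i,c)\le d(i,c')$ whenever $c\succ_i c'$. $\mathrm{top}(i)$ is the candidate ranked first by $i$. The social cost of $c$ is $\mathrm{SC}(c)=\sum_{i\in V} d(i,c)$. For $\alpha\in[0,1]$, $d$ is $\alpha$-decisive if for every voter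 $i$, $d(i,\mathrm{top}(i))\le \alpha\, d(i,c)$ for all $c\ne \mathrm{top}(i)$. The distortion of a (possibly randomized) social choice rule $f$ (mapping profiles of any number of voters over the fixed candidate set $C$ to distributions over $C$) on $\alpha$-decisive metric spaces is $\sup_{\sigma}\sup_{d} \mathbb{E}[\mathrm{SC}(f(\sigma))]/\min_{c\in C}\mathrm{SC}(c)$, where $d$ ranges over $\alpha$-decisive distance functions consistent with $\sigma$. The integral domination graph of candidate $a$ is the bipartite graph $G(a)$ with both vertex sides equal to (copies of) $V$, and an edge between $i$ (left) and $j$ (right) iff $a \succeq_i \mathrm{top}(j)$. The rule \textsc{PluralityMatching} returns an arbitrary candidate $a$ whose integral domination graph $G(a)$ admits a perfect matching (such a candidate always exists). *)

theory Defs
  imports Complex_Main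
begin

text \<open>Voters and candidates are natural numbers; the points of the (pseudo)metric
  space are elements of nat + nat: Inl i is voter i, Inr c is candidate c.
  A profile P assigns to each voter i a linear order P i on C (as a set of pairs);
  (c, c') in P i means c is weakly preferred to c' by i.\<close>

type_synonym profile = "nat \<Rightarrow> (nat \<times> nat) set"
type_synonym distance = "nat + nat \<Rightarrow> nat + nat \<Rightarrow> real"

definition profile_on :: "nat set \<Rightarrow> nat set \<Rightarrow> profile \<Rightarrow> bool" where
  "profile_on V C P \<longleftrightarrow> (\<forall>i\<in>V. linear_order_on C (P i))"

definition top :: "profile \<Rightarrow> nat set \<Rightarrow> nat \<Rightarrow> nat" where
  "top P C i = (THE c. c \<in> C \<and> (\<forall>c'\<in>C. (c, c') \<in> P i))"

definition is_metric_on :: "'a set \<Rightarrow> ('a \<Rightarrow> 'a \<Rightarrow> real) \<Rightarrow> bool" where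
  "is_metric_on X d \<longleftrightarrow>
     (\<forall>x\<in>X. d x x = 0) \<and>
     (\<forall>x\<in>X. \<forall>y\<in>X. 0 \<le> d x y \<and> d x y = d y x) \<and>
     (\<forall>x\<in>X. \<forall>y\<in>X. \<forall>z\<in>X. d x z \<le> d x y + d y z)"

definition consistent :: "nat set \<Rightarrow> nat set \<Rightarrow> profile \<Rightarrow> distance \<Rightarrow> bool" where
  "consistent V C P d \<longleftrightarrow>
     (\<forall>i\<in>V. \<forall>c\<in>C. \<forall>c'\<in>C. (c, c') \<in> P i \<and> c \<noteq> c' \<longrightarrow> d (Inl i) (Inr c) \<le> d (Inl i) (Inr c'))"

definition decisive :: "real \<Rightarrow> nat set \<Rightarrow> nat set \<Rightarrow> profile \<Rightarrow> distance \<Rightarrow> bool" where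
  "decisive \<alpha> V C P d \<longleftrightarrow>
     (\<forall>i\<in>V. \<forall>c\<in>C. c \<noteq> top P C i \<longrightarrow> d (Inl i) (Inr (top P C i)) \<le> \<alpha> * d (Inl i) (Inr c))"

definition admissible :: "real \<Rightarrow> nat set \<Rightarrow> nat set \<Rightarrow> profile \<Rightarrow> distance \<Rightarrow> bool" where
  "admissible \<alpha> V C P d \<longleftrightarrow>
     is_metric_on (Inl ` V \<union> Inr ` C) d \<and> consistent V C P d \<and> decisive \<alpha> V C P d"

definition SC :: "nat set \<Rightarrow> distance \<Rightarrow> nat \<Rightarrow> real" where
  "SC V d c = (\<Sum>i\<in>V. d (Inl i) (Inr c))"

definition dom_edge :: "profile \<Rightarrow> nat set \<Rightarrow> nat \<Rightarrow> nat \<Rightarrow> nat \<Rightarrow> bool" where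
  "dom_edge P C a i j \<longleftrightarrow> (a, top P C j) \<in> P i"

definition has_perfect_matching :: "nat set \<Rightarrow> nat set \<Rightarrow> profile \<Rightarrow> nat \<Rightarrow> bool" where
  "has_perfect_matching V C P a \<longleftrightarrow>
     (\<exists>\<pi>. bij_betw \<pi> V V \<and> (\<forall>i\<in>V. dom_edge P C a i (\<pi> i)))"

end

theory Submission
  imports Defs
begin

lemma lin_max_exists_aux:
  assumes "finite F" "F \<noteq> {}" "linear_order_on C r"
  shows "F \<subseteq> C \<Longrightarrow> \<exists>c\<in>F. \<forall>c'\<in>F. (c, c') \<in> r"
  using assms(1,2)
proof (induction F rule: finite_ne_induct)
  case (singleton x)
  then show ?case using assms(3)
    unfolding linear_order_on_def partial_order_on_def preorder_on_def refl_on_def by auto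
next
  case (insert x F)
  then obtain c where c: "c \<in> F" "\<forall>c'\<in>F. (c, c') \<in> r" by blast
  have lin: "linear_order_on C r" by fact
  have xC: "x \<in> C" "F \<subseteq> C" using insert.prems by auto
  have rf: "(x,x) \<in> r" "(c,c) \<in> r" using lin xC c(1)
    unfolding linear_order_on_def partial_order_on_def preorder_on_def refl_on_def by auto
  have tr: "trans r" and tot: "total_on C r" using lin
    unfolding linear_order_on_def partial_order_on_def preorder_on_def by auto
  show ?case
  proof (cases "(x, c) \<in> r")
    case True
    then show ?thesis using c rf tr unfolding trans_def by blast
  next
    case False
    then have "x \<noteq> c" using rf by auto
    then have "(c, x) \<in> r" using False tot xC c(1) unfolding total_on_def by blast
    then show ?thesis using c rf by blast
  qed
qed

lemma lin_max_exists:
  assumes "finite C" "C \<noteq> {}" "linear_order_on C r"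
  shows "\<exists>c\<in>C. \<forall>c'\<in>C. (c, c') \<in> r"
  using lin_max_exists_aux[OF assms] by blast

lemma top_props:
  assumes "finite C" "C \<noteq> {}" "linear_order_on C (P i)"
  shows "top P C i \<in> C \<and> (\<forall>c'\<in>C. (top P C i, c') \<in> P i)"
proof -
  obtain c where c: "c \<in> C" "\<forall>c'\<in>C. (c, c') \<in> P i" using lin_max_exists[OF assms] by blast
  have anti: "antisym (P i)" using assms(3)
    unfolding linear_order_on_def partial_order_on_def by auto
  have "(THE c. c \<in> C \<and> (\<forall>c'\<in>C. (c, c') \<in> P i)) = c"
    apply (rule the_equality)
    using c anti by (auto simp: antisym_def)
  then show ?thesis using c unfolding top_def by simp
qed


lemma part1:
  assumes fin: "finite C" and ne: "C \<noteq> {}" and prof: "profile_on V C P"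
    and adm: "admissible \<alpha> V C P d" and aC: "a \<in> C" and pm: "has_perfect_matching V C P a"
    and bC: "b \<in> C" and al: "0 \<le> \<alpha>" and finV: "finite V"
  shows "SC V d a \<le> (2 + \<alpha>) * SC V d b"
proof -
  obtain \<pi> where bij: "bij_betw \<pi> V V" and edge: "\<forall>i\<in>V. dom_edge P C a i (\<pi> i)"
    using pm unfolding has_perfect_matching_def by blast
  have met: "is_metric_on (Inl ` V \<union> Inr ` C) d" and cons: "consistent V C P d"
    and dec: "decisive \<alpha> V C P d" using adm unfolding admissible_def by auto
  have key: "d (Inl i) (Inr a) \<le> d (Inl i) (Inr b) + (1 + \<alpha>) * d (Inl (\<pi> i)) (Inr b)"
    if iV: "i \<in> V" for i
  proof -
    define j where "j = \<pi> i"
    have jV: "j \<in> V" using bij iV unfolding j_def bij_betw_def by auto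
    define t where "t = top P C j"
    have tC: "t \<in> C" using top_props[OF fin ne] prof jV unfolding profile_on_def t_def by blast
    have at: "(a, t) \<in> P i" using edge iV unfolding dom_edge_def j_def t_def by blast
    have s1: "d (Inl i) (Inr a) \<le> d (Inl i) (Inr t)"
    proof (cases "a = t")
      case False
      then show ?thesis using cons iV aC tC at unfolding consistent_def by blast
    qed simp
    have m1: "\<forall>x\<in>Inl ` V \<union> Inr ` C. \<forall>y\<in>Inl ` V \<union> Inr ` C. 0 \<le> d x y \<and> d x y = d y x"
      and m2: "\<forall>x\<in>Inl ` V \<union> Inr ` C. \<forall>y\<in>Inl ` V \<union> Inr ` C. \<forall>z\<in>Inl ` V \<union> Inr ` C. d x z \<le> d x y + d y z"
      using met unfolding is_metric_on_def by auto
    have nn: "0 \<le> d (Inl j) (Inr b)" using m1 jV bC by blast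
    show ?thesis
    proof (cases "b = t")
      case True
      then show ?thesis using s1 nn al unfolding j_def
        by (smt (verit, best) mult_nonneg_nonneg)
    next
      case False
      have dj: "d (Inl j) (Inr t) \<le> \<alpha> * d (Inl j) (Inr b)"
        using dec jV bC False unfolding decisive_def t_def by metis
      have t1: "d (Inl i) (Inr t) \<le> d (Inl i) (Inr b) + d (Inr b) (Inr t)"
        using m2 iV bC tC by blast
      have t2: "d (Inr b) (Inr t) \<le> d (Inr b) (Inl j) + d (Inl j) (Inr t)"
        using m2 jV bC tC by blast
      have sy: "d (Inr b) (Inl j) = d (Inl j) (Inr b)" using m1 jV bC by blast
      show ?thesis using s1 t1 t2 sy dj unfolding j_def[symmetric] by (simp add: algebra_simps)
    qed
  qed
  have "SC V d a \<le> (\<Sum>i\<in>V. d (Inl i) (Inr b) + (1 + \<alpha>) * d (Inl (\<pi> i)) (Inr b))"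
    unfolding SC_def by (rule sum_mono) (use key in auto)
  also have "\<dots> = SC V d b + (1 + \<alpha>) * (\<Sum>i\<in>V. d (Inl (\<pi> i)) (Inr b))"
    unfolding SC_def by (simp add: sum.distrib sum_distrib_left)
  also have "(\<Sum>i\<in>V. d (Inl (\<pi> i)) (Inr b)) = SC V d b"
    unfolding SC_def using sum.reindex_bij_betw[OF bij, of "\<lambda>j. d (Inl j) (Inr b)"] by simp
  finally show ?thesis by (simp add: algebra_simps)
qed


definition locf :: "nat \<Rightarrow> nat + nat \<Rightarrow> nat" where
  "locf m x = (case x of Inl i \<Rightarrow> (if i = 2 then 1 else 0)
     | Inr k \<Rightarrow> (if k = 0 then 0 else if k = m - 1 then 2 else 3))"

definition Dt :: "real \<Rightarrow> nat \<Rightarrow> nat \<Rightarrow> real" where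
  "Dt \<alpha> p q = (if p = q then 0 else if min p q = 1 \<and> max p q = 2 then \<alpha>
     else if (min p q = 0 \<and> max p q = 1) \<or> (min p q = 1 \<and> max p q = 3) then 1 else 1 + \<alpha>)"

definition dd :: "real \<Rightarrow> nat \<Rightarrow> distance" where
  "dd \<alpha> m x y = Dt \<alpha> (locf m x) (locf m y)"

definition PP :: "nat set \<Rightarrow> profile" where
  "PP C i = (if i = 1 then {(x,y). x \<in> C \<and> y \<in> C \<and> x \<le> y} else {(x,y). x \<in> C \<and> y \<in> C \<and> y \<le> x})"

lemma locf_range: "locf m x \<le> 3"
  unfolding locf_def by (auto split: sum.splits)

lemma Dt_tri:
  assumes "0 \<le> \<alpha>" "\<alpha> \<le> 1" "p \<le> 3" "q \<le> 3" "r \<le> 3"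
  shows "Dt \<alpha> p r \<le> Dt \<alpha> p q + Dt \<alpha> q r"
proof -
  have "p = 0 \<or> p = 1 \<or> p = 2 \<or> p = 3" "q = 0 \<or> q = 1 \<or> q = 2 \<or> q = 3"
    "r = 0 \<or> r = 1 \<or> r = 2 \<or> r = 3" using assms(3-5) by auto
  then show ?thesis using assms(1,2) unfolding Dt_def
    by (elim disjE) simp_all
qed

lemma Dt_basic: "0 \<le> \<alpha> \<Longrightarrow> 0 \<le> Dt \<alpha> p q \<and> Dt \<alpha> p q = Dt \<alpha> q p"
  unfolding Dt_def by (auto simp: min.commute max.commute)

lemma lin_le: "linear_order_on C {(x,y). x \<in> C \<and> y \<in> C \<and> x \<le> (y::nat)}"
  unfolding linear_order_on_def partial_order_on_def preorder_on_def refl_on_def trans_def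
    antisym_def total_on_def by auto

lemma lin_ge: "linear_order_on C {(x,y). x \<in> C \<and> y \<in> C \<and> y \<le> (x::nat)}"
  unfolding linear_order_on_def partial_order_on_def preorder_on_def refl_on_def trans_def
    antisym_def total_on_def by auto

lemma example:
  assumes m3: "m \<ge> 3" and al0: "0 \<le> \<alpha>" and al1: "\<alpha> \<le> 1"
  defines "C \<equiv> {0..<m}"
  shows "profile_on {1..2} C (PP C) \<and> admissible \<alpha> {1..2} C (PP C) (dd \<alpha> m)
     \<and> has_perfect_matching {1..2} C (PP C) 1
     \<and> Min (SC {1..2} (dd \<alpha> m) ` C) = 1 \<and> SC {1..2} (dd \<alpha> m) 1 = 2 + \<alpha>"
proof -
  have fin: "finite C" and ne: "C \<noteq> {}" using m3 unfolding C_def by auto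
  have V: "{1..2::nat} = {1,2}" by auto
  have prof: "profile_on {1..2} C (PP C)"
    unfolding profile_on_def PP_def using lin_le lin_ge by auto
  have top1: "top (PP C) C 1 = 0"
  proof -
    have "top (PP C) C 1 \<in> C \<and> (\<forall>c'\<in>C. (top (PP C) C 1, c') \<in> PP C 1)"
      by (rule top_props[OF fin ne]) (simp add: PP_def lin_le)
    moreover have "0 \<in> C" using m3 unfolding C_def by auto
    ultimately show ?thesis unfolding PP_def by auto
  qed
  have top2: "top (PP C) C 2 = m - 1"
  proof -
    have "top (PP C) C 2 \<in> C \<and> (\<forall>c'\<in>C. (top (PP C) C 2, c') \<in> PP C 2)"
      by (rule top_props[OF fin ne]) (simp add: PP_def lin_ge)
    moreover have "m - 1 \<in> C" using m3 unfolding C_def by auto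
    ultimately show ?thesis unfolding PP_def C_def by fastforce
  qed
  have met: "is_metric_on (Inl ` {1..2} \<union> Inr ` C) (dd \<alpha> m)"
    unfolding is_metric_on_def dd_def
  proof (intro conjI ballI)
    fix x y z
    show "Dt \<alpha> (locf m x) (locf m x) = 0" by (simp add: Dt_def)
    show "0 \<le> Dt \<alpha> (locf m x) (locf m y)" "Dt \<alpha> (locf m x) (locf m y) = Dt \<alpha> (locf m y) (locf m x)"
      using Dt_basic[OF al0] by blast+
    show "Dt \<alpha> (locf m x) (locf m z) \<le> Dt \<alpha> (locf m x) (locf m y) + Dt \<alpha> (locf m y) (locf m z)"
      by (rule Dt_tri[OF al0 al1 locf_range locf_range locf_range])
  qed
  have d1: "dd \<alpha> m (Inl 1) (Inr c) = (if c = 0 then 0 else 1 + \<alpha>)" for c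
    using m3 unfolding dd_def locf_def Dt_def by auto
  have d2: "dd \<alpha> m (Inl 2) (Inr c) = (if c = m - 1 then \<alpha> else 1)" for c
    using m3 unfolding dd_def locf_def Dt_def by auto
  have cons: "consistent {1..2} C (PP C) (dd \<alpha> m)"
    unfolding consistent_def V
  proof (intro ballI impI)
    fix i c c' assume i: "i \<in> {1,2::nat}" and c: "c \<in> C" "c' \<in> C"
      and h: "(c, c') \<in> PP C i \<and> c \<noteq> c'"
    from i have "i = 1 \<or> i = 2" by auto
    then show "dd \<alpha> m (Inl i) (Inr c) \<le> dd \<alpha> m (Inl i) (Inr c')"
    proof
      assume i1: "i = 1"
      then have "c \<le> c'" using h by (simp add: PP_def)
      then have "c' \<noteq> 0" using h by auto
      then show ?thesis unfolding i1 d1 using al0 by auto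
    next
      assume i2: "i = 2"
      then have "c' \<le> c" using h by (simp add: PP_def)
      moreover have "c < m" using c unfolding C_def by auto
      ultimately have "c' \<noteq> m - 1" using h by auto
      then show ?thesis unfolding i2 d2 using al1 by auto
    qed
  qed
  have dec: "decisive \<alpha> {1..2} C (PP C) (dd \<alpha> m)"
    unfolding decisive_def V
  proof (intro ballI impI)
    fix i c assume i: "i \<in> {1,2::nat}" and c: "c \<in> C" and h: "c \<noteq> top (PP C) C i"
    from i have "i = 1 \<or> i = 2" by auto
    then show "dd \<alpha> m (Inl i) (Inr (top (PP C) C i)) \<le> \<alpha> * dd \<alpha> m (Inl i) (Inr c)"
    proof
      assume i1: "i = 1"
      show ?thesis unfolding i1 top1 d1 using al0 by auto
    next
      assume i2: "i = 2"
      show ?thesis using h unfolding i2 top2 d2 by auto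
    qed
  qed
  have pm: "has_perfect_matching {1..2} C (PP C) 1"
    unfolding has_perfect_matching_def
  proof (intro exI[of _ "\<lambda>i. 3 - i"] conjI)
    show "bij_betw (\<lambda>i. 3 - i) {1..2::nat} {1..2}"
      unfolding V bij_betw_def by auto
    show "\<forall>i\<in>{1..2}. dom_edge (PP C) C 1 i (3 - i)"
      unfolding V dom_edge_def using top1 top2 m3 by (auto simp: PP_def C_def)
  qed
  have SCv: "SC {1..2} (dd \<alpha> m) c = (if c = 0 then 0 else 1 + \<alpha>) + (if c = m - 1 then \<alpha> else 1)" for c
  proof -
    have "SC {1..2} (dd \<alpha> m) c = dd \<alpha> m (Inl 1) (Inr c) + dd \<alpha> m (Inl 2) (Inr c)"
      unfolding SC_def V by (simp del: One_nat_def)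
    then show ?thesis unfolding d1 d2 .
  qed
  have sc1: "SC {1..2} (dd \<alpha> m) 1 = 2 + \<alpha>" unfolding SCv using m3 by auto
  have mn: "Min (SC {1..2} (dd \<alpha> m) ` C) = 1"
  proof (rule Min_eqI)
    show "finite (SC {1..2} (dd \<alpha> m) ` C)" using fin by simp
    show "1 \<le> y" if "y \<in> SC {1..2} (dd \<alpha> m) ` C" for y
      using that al0 m3 unfolding SCv by auto
    show "1 \<in> SC {1..2} (dd \<alpha> m) ` C"
    proof
      show "1 = SC {1..2} (dd \<alpha> m) 0" unfolding SCv using m3 by simp
      show "0 \<in> C" using m3 unfolding C_def by simp
    qed
  qed
  have adm: "admissible \<alpha> {1..2} C (PP C) (dd \<alpha> m)"
    unfolding admissible_def using met cons dec by blast
  show ?thesis using prof adm pm mn sc1 by blast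
qed


theorem theorem1:
  fixes m :: nat and \<alpha> :: real
  assumes "m \<ge> 3" and "0 \<le> \<alpha>" and "\<alpha> \<le> 1"
  shows "(\<forall>(n::nat) (C::nat set) (P::profile) (d::distance) (a::nat) (b::nat).
            1 \<le> n \<and> finite C \<and> card C = m \<and> profile_on {1..n} C P \<and>
            admissible \<alpha> {1..n} C P d \<and> a \<in> C \<and> has_perfect_matching {1..n} C P a \<and> b \<in> C
            \<longrightarrow> SC {1..n} d a \<le> (2 + \<alpha>) * SC {1..n} d b)
       \<and> Sup {SC {1..n} d a / Min (SC {1..n} d ` C) | (n::nat) (C::nat set) (P::profile) (d::distance) (a::nat).
            1 \<le> n \<and> finite C \<and> card C = m \<and> profile_on {1..n} C P \<and>
            admissible \<alpha> {1..n} C P d \<and> a \<in> C \<and> has_perfect_matching {1..n} C P a \<and>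
            0 < Min (SC {1..n} d ` C)} = 2 + \<alpha>"
proof -
  have P1: "\<forall>(n::nat) (C::nat set) (P::profile) (d::distance) (a::nat) (b::nat).
            1 \<le> n \<and> finite C \<and> card C = m \<and> profile_on {1..n} C P \<and>
            admissible \<alpha> {1..n} C P d \<and> a \<in> C \<and> has_perfect_matching {1..n} C P a \<and> b \<in> C
            \<longrightarrow> SC {1..n} d a \<le> (2 + \<alpha>) * SC {1..n} d b"
  proof (intro allI impI)
    fix n C P d a b
    assume h: "1 \<le> n \<and> finite C \<and> card C = m \<and> profile_on {1..n} C P \<and>
            admissible \<alpha> {1..n} C P d \<and> a \<in> C \<and> has_perfect_matching {1..n} C P a \<and> b \<in> C"
    have "C \<noteq> {}" using h assms(1) by auto
    then show "SC {1..n} d a \<le> (2 + \<alpha>) * SC {1..n} d b"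
      using part1[of C "{1..n}" P \<alpha> d a b] h assms(2) by auto
  qed
  let ?S = "{SC {1..n} d a / Min (SC {1..n} d ` C) | (n::nat) (C::nat set) (P::profile) (d::distance) (a::nat).
            1 \<le> n \<and> finite C \<and> card C = m \<and> profile_on {1..n} C P \<and>
            admissible \<alpha> {1..n} C P d \<and> a \<in> C \<and> has_perfect_matching {1..n} C P a \<and>
            0 < Min (SC {1..n} d ` C)}"
  have mem: "2 + \<alpha> \<in> ?S"
  proof -
    have ex: "profile_on {1..2} {0..<m} (PP {0..<m}) \<and> admissible \<alpha> {1..2} {0..<m} (PP {0..<m}) (dd \<alpha> m)
     \<and> has_perfect_matching {1..2} {0..<m} (PP {0..<m}) 1
     \<and> Min (SC {1..2} (dd \<alpha> m) ` {0..<m}) = 1 \<and> SC {1..2} (dd \<alpha> m) 1 = 2 + \<alpha>"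
      using example[OF assms] by simp
    have "1 \<in> {0..<m}" using assms(1) by simp
    then show ?thesis
      apply (simp only: mem_Collect_eq)
      apply (rule exI[of _ 2], rule exI[of _ "{0..<m}"], rule exI[of _ "PP {0..<m}"],
          rule exI[of _ "dd \<alpha> m"], rule exI[of _ 1])
      using ex by simp
  qed
  have ub: "\<forall>x\<in>?S. x \<le> 2 + \<alpha>"
  proof
    fix x assume "x \<in> ?S"
    then obtain n C P d a where x: "x = SC {1..n} d a / Min (SC {1..n} d ` C)"
      and h: "1 \<le> n \<and> finite C \<and> card C = m \<and> profile_on {1..n} C P \<and>
            admissible \<alpha> {1..n} C P d \<and> a \<in> C \<and> has_perfect_matching {1..n} C P a \<and>
            0 < Min (SC {1..n} d ` C)" by blast
    have "C \<noteq> {}" using h assms(1) by auto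
    then have "Min (SC {1..n} d ` C) \<in> SC {1..n} d ` C" using h by (intro Min_in) auto
    then obtain b where b: "b \<in> C" "Min (SC {1..n} d ` C) = SC {1..n} d b" by auto
    have "SC {1..n} d a \<le> (2 + \<alpha>) * SC {1..n} d b" using P1 h b(1) by blast
    then show "x \<le> 2 + \<alpha>" unfolding x b(2) using h b(2)
      by (simp add: pos_divide_le_eq)
  qed
  have "Sup ?S = 2 + \<alpha>" by (rule cSup_eq_maximum[OF mem]) (use ub in blast)
  then show ?thesis using P1 by blast
qed

end
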